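(* Let $C$ be a nonempty subset of a Hilbert space $H$ and let $\mathcal{S}=\{T_s:s\in S\}$ be a representation of a semigroup $S$ on $C$. If $A_C(\mathcal{S})\neq\emptyset$, then $A_C(\mathcal{S})$ is closed and convex.
   Context: A representation is a family of maps $T_s:C\to C$ with $T_{st}=T_s\circ T_t$. $A_C(\mathcal{S})$ is the set of all $a\in H$ with $\|a-T_sx\|\le\|a-x\|$ for all $x\in C$ and $s\in S$. *)

theory Defs
  imports "HOL-Analysis.Analysis"
begin

definition representation :: "'a set \<Rightarrow> ('s::semigroup_mult \<Rightarrow> 'a \<Rightarrow> 'a) \<Rightarrow> bool" where
  "representation C T \<longleftrightarrow>
     (\<forall>s. \<forall>x\<in>C. T s x \<in> C) \<and> (\<forall>s t. \<forall>x\<in>C. T (s * t) x = T s (T t x))"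

definition attractive_points :: "'a::real_normed_vector set \<Rightarrow> ('s \<Rightarrow> 'a \<Rightarrow> 'a) \<Rightarrow> 'a set" where
  "attractive_points C T = {a. \<forall>x\<in>C. \<forall>s. norm (a - T s x) \<le> norm (a - x)}"

end

theory Submission
  imports Defs
begin

lemma ap_eq:
  fixes a x y :: "'a::real_inner"
  shows "norm (a - y) \<le> norm (a - x) \<longleftrightarrow> inner (2 *\<^sub>R (x - y)) a \<le> (norm x)^2 - (norm y)^2"
proof -
  have "norm (a - y) \<le> norm (a - x) \<longleftrightarrow> (norm (a - y))^2 \<le> (norm (a - x))^2"
    by (simp add: norm_le_square power2_norm_eq_inner)
  also have "\<dots> \<longleftrightarrow> inner (2 *\<^sub>R (x - y)) a \<le> (norm x)^2 - (norm y)^2"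
    by (simp add: power2_norm_eq_inner inner_diff_left inner_diff_right inner_commute algebra_simps)
  finally show ?thesis .
qed

theorem lemma4p9:
  fixes C :: "'a::{real_inner, complete_space} set"
    and T :: "'s::semigroup_mult \<Rightarrow> 'a \<Rightarrow> 'a"
  assumes "C \<noteq> {}"
    and "representation C T"
    and "attractive_points C T \<noteq> {}"
  shows "closed (attractive_points C T) \<and> convex (attractive_points C T)"
proof -
  have eq: "attractive_points C T = (\<Inter>x\<in>C. \<Inter>s. {a. inner (2 *\<^sub>R (x - T s x)) a \<le> (norm x)^2 - (norm (T s x))^2})"
    unfolding attractive_points_def by (auto simp: ap_eq)
  show ?thesis unfolding eq
    by (intro conjI closed_INT convex_INT ballI allI closed_halfspace_le convex_halfspace_le)
qed

end
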